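(* Consider an exponential bottleneck game on a graph $G$, a Nash-routing $\mathbf{p}=[p_1,\dots,p_N]$ and a routing $\mathbf{p}^*=[p_1^*,\dots,p_N^*]$ of minimum social cost, and suppose $C^*=C(\mathbf{p}^* )=1$ and $L^*\ge 2$. Let $\hat C=\lceil\max_i\log_2\widetilde C_i(\mathbf{p})\rceil$ and $l_1^*=\log_2(L^*-1)$. Then for every integer $i$ with $1\le i\le \hat C-l_1^*-11$, every non-empty set of players $X\subseteq S^{(i)}$ is not self-sufficient in $\mathbf{p}$.
   Context: Player $\pi_i$ has a strategy set $\mathcal{P}_i$ of paths from $u_i$ to $v_i$; a routing is $\mathbf{p}=[p_1,\dots,p_N]$ with $p_i\in\mathcal{P}_i$. $C_e(\mathbf{p})$ is the number of paths in $\mathbf{p}$ using edge $e$; social cost $C(\mathbf{p})=\max_eC_e(\mathbf{p})$; player cost $\widetilde C_i(\mathbf{p})=\sum_{e\in p_i}2^{C_e(\mathbf{p})}$. A Nash-routing is one in which no player can strictly lower its cost by unilaterally switching to another path in its strategy set. $L^*$ is the maximum length (number of edges) of a path in $\mathbf{p}^*$. Stage $i$ ($1\le i\le\hat C$): $S^{(i)}$ is the set of players $\pi_j$ whose cost in $\mathbf{p}$ satisfies $2^{\hat C-i}+2\le\widetilde C_j(\mathbf{p})\le 2^{\hat C-i+1}$. Self-sufficiency: for a set $S$ of players and $\pi_j\in S$, let $\mathbf{q}_j$ be the routing consisting only of the players in $S$, where every player of $S$ other than $\pi_j$ uses its path from $\mathbf{p}$ and $\pi_j$ uses $p_j^*$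 (congestions in $\mathbf{q}_j$ count only these paths). $S$ is self-sufficient in $\mathbf{p}$ if for every $\pi_j\in S$ the cost of $\pi_j$ in $\mathbf{q}_j$, $\sum_{e\in p_j^*}2^{C_e(\mathbf{q}_j)}$, is at least $\widetilde C_j(\mathbf{p})$. Logarithms are base 2. *)

theory Defs
  imports Complex_Main
begin

text \<open>Players are indexed 0..N-1; a routing is a function from player indices to paths.\<close>

definition graph :: "'v set \<Rightarrow> 'v set set \<Rightarrow> bool" where
  "graph V E \<longleftrightarrow> finite V \<and> finite E \<and> (\<forall>e\<in>E. e \<subseteq> V \<and> card e = 2)"

definition pedges :: "'v list \<Rightarrow> 'v set set" where
  "pedges xs = {{xs ! k, xs ! Suc k} | k. Suc k < length xs}"

definition plen :: "'v list \<Rightarrow> nat" where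
  "plen xs = length xs - 1"

definition is_path :: "'v set set \<Rightarrow> 'v \<Rightarrow> 'v \<Rightarrow> 'v list \<Rightarrow> bool" where
  "is_path E u v xs \<longleftrightarrow> xs \<noteq> [] \<and> hd xs = u \<and> last xs = v \<and> distinct xs
     \<and> (\<forall>k. Suc k < length xs \<longrightarrow> {xs ! k, xs ! Suc k} \<in> E)"

definition valid_routing :: "nat \<Rightarrow> (nat \<Rightarrow> 'v list set) \<Rightarrow> (nat \<Rightarrow> 'v list) \<Rightarrow> bool" where
  "valid_routing N P r \<longleftrightarrow> (\<forall>i<N. r i \<in> P i)"

definition cong :: "nat \<Rightarrow> (nat \<Rightarrow> 'v list) \<Rightarrow> 'v set \<Rightarrow> nat" where
  "cong N r e = card {i. i < N \<and> e \<in> pedges (r i)}"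

definition soc_cost :: "'v set set \<Rightarrow> nat \<Rightarrow> (nat \<Rightarrow> 'v list) \<Rightarrow> nat" where
  "soc_cost E N r = Max (insert 0 (cong N r ` E))"

definition pcost :: "nat \<Rightarrow> (nat \<Rightarrow> 'v list) \<Rightarrow> nat \<Rightarrow> nat" where
  "pcost N r i = (\<Sum>e\<in>pedges (r i). 2 ^ cong N r e)"

definition nash :: "nat \<Rightarrow> (nat \<Rightarrow> 'v list set) \<Rightarrow> (nat \<Rightarrow> 'v list) \<Rightarrow> bool" where
  "nash N P r \<longleftrightarrow> valid_routing N P r \<and>
     (\<forall>i<N. \<forall>q\<in>P i. \<not> pcost N (r(i := q)) i < pcost N r i)"

definition optimal :: "'v set set \<Rightarrow> nat \<Rightarrow> (nat \<Rightarrow> 'v list set) \<Rightarrow> (nat \<Rightarrow> 'v list) \<Rightarrow> bool" where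
  "optimal E N P r \<longleftrightarrow> valid_routing N P r \<and>
     (\<forall>r'. valid_routing N P r' \<longrightarrow> soc_cost E N r \<le> soc_cost E N r')"

definition maxlen :: "nat \<Rightarrow> (nat \<Rightarrow> 'v list) \<Rightarrow> nat" where
  "maxlen N r = Max {plen (r i) | i. i < N}"

definition Chat :: "nat \<Rightarrow> (nat \<Rightarrow> 'v list) \<Rightarrow> int" where
  "Chat N r = \<lceil>Max {log 2 (real (pcost N r i)) | i. i < N}\<rceil>"

definition stage :: "nat \<Rightarrow> (nat \<Rightarrow> 'v list) \<Rightarrow> int \<Rightarrow> nat set" where
  "stage N r i = {j. j < N \<and>
      2 powr (real_of_int (Chat N r - i)) + 2 \<le> real (pcost N r j) \<and>
      real (pcost N r j) \<le> 2 powr (real_of_int (Chat N r - i + 1))}"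

text \<open>Congestion in q_j: only players of S, with j using its path from pstar\<close>
definition cong_q :: "nat set \<Rightarrow> (nat \<Rightarrow> 'v list) \<Rightarrow> (nat \<Rightarrow> 'v list) \<Rightarrow> nat \<Rightarrow> 'v set \<Rightarrow> nat" where
  "cong_q S r rs j e = card {k. k \<in> S \<and> e \<in> pedges ((r(j := rs j)) k)}"

definition self_sufficient :: "nat set \<Rightarrow> nat \<Rightarrow> (nat \<Rightarrow> 'v list) \<Rightarrow> (nat \<Rightarrow> 'v list) \<Rightarrow> bool" where
  "self_sufficient S N r rs \<longleftrightarrow>
     (\<forall>j\<in>S. (\<Sum>e\<in>pedges (rs j). (2::nat) ^ cong_q S r rs j e) \<ge> pcost N r j)"

end

theory Submission
  imports Defs
begin

lemma swap_count:
  fixes f :: "'e \<Rightarrow> nat"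
  assumes "finite X" "finite E" "\<forall>j\<in>X. A j \<subseteq> E"
  shows "(\<Sum>j\<in>X. \<Sum>e\<in>A j. f e) = (\<Sum>e\<in>E. card {j\<in>X. e \<in> A j} * f e)"
proof -
  have "(\<Sum>j\<in>X. \<Sum>e\<in>A j. f e) = (\<Sum>j\<in>X. \<Sum>e\<in>{e\<in>E. e \<in> A j}. f e)"
  proof (rule sum.cong)
    fix j assume "j \<in> X"
    then have "{e\<in>E. e \<in> A j} = A j" using assms(3) by auto
    then show "sum f (A j) = sum f {e\<in>E. e \<in> A j}" by simp
  qed simp
  also have "\<dots> = (\<Sum>e\<in>E. \<Sum>j\<in>{j\<in>X. e \<in> A j}. f e)"
    by (rule sum.swap_restrict[OF assms(1,2)])
  also have "\<dots> = (\<Sum>e\<in>E. card {j\<in>X. e \<in> A j} * f e)" by simp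
  finally show ?thesis .
qed

lemma pedges_card: "card (pedges xs) \<le> plen xs"
proof -
  have "pedges xs = (\<lambda>k. {xs ! k, xs ! Suc k}) ` {..< length xs - 1}"
    unfolding pedges_def by auto
  then have "card (pedges xs) \<le> card {..< length xs - 1}"
    by (metis card_image_le finite_lessThan)
  then show ?thesis by (simp add: plen_def)
qed

lemma path_edges: "is_path E a b xs \<Longrightarrow> pedges xs \<subseteq> E"
  unfolding is_path_def pedges_def by auto

lemma pointwise: "3 * 2 ^ Suc n \<le> 8 + 2 * n * (2::nat) ^ n"
proof (cases "n < 3")
  case True
  then have "n = 0 \<or> n = 1 \<or> n = 2" by auto
  then show ?thesis by auto
next
  case False
  have a: "6 * (2::nat) ^ n \<le> (2 * n) * 2 ^ n" by (rule mult_le_mono1) (use False in simp)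
  have b: "3 * 2 ^ Suc n = 6 * (2::nat) ^ n" by simp
  show ?thesis using a b by linarith
qed

theorem lemma2:
  fixes V :: "'v set" and E :: "'v set set" and N :: nat
    and u v :: "nat \<Rightarrow> 'v" and P :: "nat \<Rightarrow> 'v list set"
    and p pstar :: "nat \<Rightarrow> 'v list"
  assumes "graph V E"
    and "\<forall>i<N. P i \<subseteq> {xs. is_path E (u i) (v i) xs}"
    and "nash N P p"
    and "optimal E N P pstar"
    and "soc_cost E N pstar = 1"
    and "maxlen N pstar \<ge> 2"
  shows "\<forall>i::int. 1 \<le> i \<and> real_of_int i \<le> real_of_int (Chat N p) - log 2 (real (maxlen N pstar) - 1) - 11
      \<longrightarrow> (\<forall>X. X \<noteq> {} \<and> X \<subseteq> stage N p i \<longrightarrow> \<not> self_sufficient X N p pstar)"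
proof (intro allI impI notI)
  fix i :: int and X
  assume hi: "1 \<le> i \<and> real_of_int i \<le> real_of_int (Chat N p) - log 2 (real (maxlen N pstar) - 1) - 11"
  assume hX: "X \<noteq> {} \<and> X \<subseteq> stage N p i"
  assume ss: "self_sufficient X N p pstar"
  define L where "L = maxlen N pstar"
  have L2: "L \<ge> 2" using assms(6) L_def by simp
  have finE: "finite E" using assms(1) graph_def by auto
  have XN: "X \<subseteq> {..<N}" using hX unfolding stage_def by auto
  have finX: "finite X" using XN finite_subset by blast
  have pE: "\<forall>j\<in>X. pedges (p j) \<subseteq> E"
  proof
    fix j assume "j \<in> X"
    then have j: "j < N" using XN by auto
    then have "p j \<in> P j" using assms(3) unfolding nash_def valid_routing_def by auto
    then have "is_path E (u j) (v j) (p j)" using assms(2) j by auto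
    then show "pedges (p j) \<subseteq> E" by (rule path_edges)
  qed
  have psE: "\<forall>j\<in>X. pedges (pstar j) \<subseteq> E"
  proof
    fix j assume "j \<in> X"
    then have j: "j < N" using XN by auto
    then have "pstar j \<in> P j" using assms(4) unfolding optimal_def valid_routing_def by auto
    then have "is_path E (u j) (v j) (pstar j)" using assms(2) j by auto
    then show "pedges (pstar j) \<subseteq> E" by (rule path_edges)
  qed
  have plenL: "\<forall>j\<in>X. card (pedges (pstar j)) \<le> L"
  proof
    fix j assume "j \<in> X"
    then have "j < N" using XN by auto
    then have "plen (pstar j) \<le> L" unfolding L_def maxlen_def
      by (intro Max_ge) auto
    then show "card (pedges (pstar j)) \<le> L" using pedges_card order_trans by blast
  qed
  have big: "\<forall>j\<in>X. 8 * L + 1 \<le> pcost N p j"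
  proof
    fix j assume "j \<in> X"
    then have c1: "2 powr (real_of_int (Chat N p - i)) + 2 \<le> real (pcost N p j)"
      using hX \<open>j \<in> X\<close> unfolding stage_def by auto
    have Lr: "real L - 1 > 0" using L2 by simp
    have "real_of_int (Chat N p - i) \<ge> log 2 (real L - 1) + 11" using hi L_def by simp
    then have "2 powr (real_of_int (Chat N p - i)) \<ge> 2 powr (log 2 (real L - 1) + 11)"
      by (intro powr_mono) auto
    also have "2 powr (log 2 (real L - 1) + 11) = (real L - 1) * 2048"
      using Lr by (simp add: powr_add)
    finally have "real (pcost N p j) \<ge> (real L - 1) * 2048 + 2" using c1 by linarith
    then have "real (pcost N p j) \<ge> real (8 * L + 1)" using L2 by simp
    then show "8 * L + 1 \<le> pcost N p j" by linarith
  qed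
  define n where "n e = card {k\<in>X. e \<in> pedges (p k)}" for e
  define m where "m e = card {k\<in>X. e \<in> pedges (pstar k)}" for e
  have m1: "\<forall>e\<in>E. m e \<le> 1"
  proof
    fix e assume e: "e \<in> E"
    have "m e \<le> cong N pstar e" unfolding m_def cong_def
      by (rule card_mono) (use XN in auto)
    also have "\<dots> \<le> soc_cost E N pstar" unfolding soc_cost_def
      using e finE by (intro Max_ge) auto
    finally show "m e \<le> 1" using assms(5) by simp
  qed
  define R where "R = (\<Sum>j\<in>X. pcost N p j)"
  have cq: "\<And>j e. j \<in> X \<Longrightarrow> cong_q X p pstar j e \<le> Suc (n e)"
  proof -
    fix j e assume j: "j \<in> X"
    have "cong_q X p pstar j e \<le> card (insert j {k\<in>X. e \<in> pedges (p k)})"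
      unfolding cong_q_def by (rule card_mono) (use finX in auto)
    also have "\<dots> \<le> Suc (n e)" unfolding n_def by (rule card_insert_le_m1) auto
    finally show "cong_q X p pstar j e \<le> Suc (n e)" .
  qed
  have R1: "R \<le> (\<Sum>j\<in>X. \<Sum>e\<in>pedges (pstar j). 2 ^ Suc (n e))"
    unfolding R_def
  proof (rule sum_mono)
    fix j assume j: "j \<in> X"
    have "pcost N p j \<le> (\<Sum>e\<in>pedges (pstar j). (2::nat) ^ cong_q X p pstar j e)"
      using ss j unfolding self_sufficient_def by auto
    also have "\<dots> \<le> (\<Sum>e\<in>pedges (pstar j). 2 ^ Suc (n e))"
      by (rule sum_mono) (use cq[OF j] in \<open>intro power_increasing\<close>, auto)
    finally show "pcost N p j \<le> (\<Sum>e\<in>pedges (pstar j). 2 ^ Suc (n e))" .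
  qed
  also have "\<dots> = (\<Sum>e\<in>E. m e * 2 ^ Suc (n e))"
    unfolding m_def by (rule swap_count[OF finX finE psE])
  finally have R0: "R \<le> (\<Sum>e\<in>E. m e * 2 ^ Suc (n e))" .
  have "3 * R \<le> 3 * (\<Sum>e\<in>E. m e * 2 ^ Suc (n e))" using R0 by simp
  also have "\<dots> = (\<Sum>e\<in>E. m e * (3 * 2 ^ Suc (n e)))"
    by (simp add: sum_distrib_left mult_ac)
  also have "\<dots> \<le> (\<Sum>e\<in>E. 8 * m e + 2 * (n e * 2 ^ n e))"
  proof (rule sum_mono)
    fix e assume e: "e \<in> E"
    have "m e * (3 * 2 ^ Suc (n e)) \<le> m e * (8 + 2 * n e * 2 ^ n e)"
      using pointwise by (intro mult_le_mono2) auto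
    also have "\<dots> = 8 * m e + m e * (2 * n e * 2 ^ n e)" by (simp add: algebra_simps)
    also have "\<dots> \<le> 8 * m e + 1 * (2 * n e * 2 ^ n e)"
      using m1 e by (intro add_le_mono1 mult_le_mono1 add_left_mono) auto
    finally show "m e * (3 * 2 ^ Suc (n e)) \<le> 8 * m e + 2 * (n e * 2 ^ n e)" by simp
  qed
  also have "\<dots> = 8 * (\<Sum>e\<in>E. m e * 1) + 2 * (\<Sum>e\<in>E. n e * 2 ^ n e)"
    by (simp add: sum.distrib sum_distrib_left)
  also have "(\<Sum>e\<in>E. m e * 1) = (\<Sum>j\<in>X. \<Sum>e\<in>pedges (pstar j). 1)"
    unfolding m_def by (rule swap_count[OF finX finE psE, symmetric])
  also have "(\<Sum>e\<in>E. n e * 2 ^ n e) = (\<Sum>j\<in>X. \<Sum>e\<in>pedges (p j). 2 ^ n e)"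
    unfolding n_def by (rule swap_count[OF finX finE pE, symmetric])
  also have "(\<Sum>j\<in>X. \<Sum>e\<in>pedges (p j). 2 ^ n e) \<le> R"
    unfolding R_def pcost_def
  proof (intro sum_mono power_increasing)
    fix j e assume "j \<in> X"
    show "n e \<le> cong N p e" unfolding n_def cong_def
      by (rule card_mono) (use XN in auto)
  qed auto
  also have "(\<Sum>j\<in>X. \<Sum>e\<in>pedges (pstar j). (1::nat)) \<le> (\<Sum>j\<in>X. L)"
    using plenL by (intro sum_mono) auto
  finally have A: "3 * R \<le> 8 * (card X * L) + 2 * R" by (simp add: mult_ac)
  have "(\<Sum>j\<in>X. 8 * L + 1) \<le> R" unfolding R_def using big by (intro sum_mono) auto
  then have "card X * (8 * L + 1) \<le> R" by (simp add: mult_ac)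
  moreover have "card X > 0" using hX finX by (simp add: card_gt_0_iff)
  ultimately show False using A by (simp add: algebra_simps)
qed

end
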